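(* Consider Algorithm SS-SQP (described in the context) under the standing assumptions (A1), (A2). There exists a constant $\kappa_l>0$ such that for all $k\in\mathbb{N}$, $$\Delta l(x_k,\bar\tau_k,\bar g_k,\bar d_k)\ge\kappa_l\bar\tau_k(\|\bar d_k\|^2+\|c_k\|).$$
   Context: Problem: $\min_{x\in\mathbb{R}^n}f(x)$ s.t. $c(x)=0$ with $f,c$ continuously differentiable, $c:\mathbb{R}^n\to\mathbb{R}^m$, $m\le n$; $c_k=c(x_k)$, $J_k=\nabla c(x_k)^T$; $\|\cdot\|$ Euclidean norm. $\Delta l(x,\tau,g,d)=-\tau g^Td+\|c(x)\|_1$. Standing assumption (A1): there is an open convex set $\mathcal{X}$ containing all iterates and trial iterates; $f$ bounded below, $\nabla f$ $L$-Lipschitz and bounded, $c$ bounded, each $\nabla c_i$ Lipschitz and bounded on $\mathcal{X}$; singular values of $\nabla c(x)^T$ bounded away from zero on $\mathcal{X}$. (A2): $H_k$ symmetric, chosen independently of $\bar g_k$, $\|H_k\|\le\kappa_H$, $u^TH_ku\ge\zeta\|u\|^2$ for $u\in\mathrm{Null}(J_k)$, $\kappa_H,\zeta>0$. Algorithm SS-SQP: inputs $x_0$, $\bar\tau_{-1}>0$, $\alpha_{\max}\in(0,1]$, $\alpha_0\in(0,\alpha_{\max}]$, $\epsilon_f\ge0$, $\gamma,\theta,\sigma,\epsilon_\tau\in(0,1)$. At iteration $k$: random gradient estimate $\bar g_k$; solve $\begin{bmatrix}H_k & J_k^T\\ J_k&0\end{bmatrix}\begin{bmatrix}\bar d_k\\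 \bar y_k\end{bmatrix}=-\begin{bmatrix}\bar g_k\\ c_k\end{bmatrix}$; $\bar\tau_k^{\rm trial}=\infty$ if $\bar g_k^T\bar d_k+\max\{\bar d_k^TH_k\bar d_k,0\}\le0$, else $(1-\sigma)\|c_k\|_1/(\bar g_k^T\bar d_k+\max\{\bar d_k^TH_k\bar d_k,0\})$; $\bar\tau_k=\bar\tau_{k-1}$ if $\bar\tau_{k-1}\le\bar\tau_k^{\rm trial}$, else $\min\{(1-\epsilon_\tau)\bar\tau_{k-1},\bar\tau_k^{\rm trial}\}$; $x_k^+=x_k+\alpha_k\bar d_k$; with objective estimates $\bar f$ and $\bar\phi(x,\tau;\xi)=\tau\bar f(x;\xi)+\|c(x)\|_1$, set $x_{k+1}=x_k^+$, $\alpha_{k+1}=\min\{\alpha_{\max},\alpha_k/\gamma\}$ if $\bar\phi(x_k^+,\bar\tau_k;\xi_k^+)\le\bar\phi(x_k,\bar\tau_k;\xi_k^0)-\alpha_k\theta\Delta l(x_k,\bar\tau_k,\bar g_k,\bar d_k)+2\bar\tau_k\epsilon_f$, else $x_{k+1}=x_k$, $\alpha_{k+1}=\gamma\alpha_k$. *)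

theory Defs
  imports "HOL-Analysis.Analysis"
begin

definition l1norm :: "real^'m \<Rightarrow> real" where
  "l1norm v = (\<Sum>i\<in>UNIV. \<bar>v $ i\<bar>)"

definition Delta_l :: "(real^'n \<Rightarrow> real^'m) \<Rightarrow> real^'n \<Rightarrow> real \<Rightarrow> real^'n \<Rightarrow> real^'n \<Rightarrow> real" where
  "Delta_l c x tau g d = - tau * (g \<bullet> d) + l1norm (c x)"

definition tau_trial :: "real \<Rightarrow> real \<Rightarrow> real \<Rightarrow> ereal" where
  "tau_trial sgm cnorm1 den = (if den \<le> 0 then \<infinity> else ereal ((1 - sgm) * cnorm1 / den))"

definition tau_update :: "real \<Rightarrow> real \<Rightarrow> ereal \<Rightarrow> real" where
  "tau_update eps_tau taup trial =
     (if ereal taup \<le> trial then taup else min ((1 - eps_tau) * taup) (real_of_ereal trial))"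

text \<open>J z is the Jacobian (m x n) of c at z.
  fplus k, fzero k are the objective estimates f(x_k^+; xi_k^+) and f(x_k; xi_k^0).
  tau k is tau_bar_k (tau_m1 is tau_bar_{-1}).\<close>
definition ss_sqp ::
  "(real^'n \<Rightarrow> real^'m) \<Rightarrow> (real^'n \<Rightarrow> real^'n^'m) \<Rightarrow> real^'n \<Rightarrow> real \<Rightarrow> real \<Rightarrow> real \<Rightarrow> real
   \<Rightarrow> real \<Rightarrow> real \<Rightarrow> real \<Rightarrow> real
   \<Rightarrow> (nat \<Rightarrow> real) \<Rightarrow> (nat \<Rightarrow> real) \<Rightarrow> (nat \<Rightarrow> real^'n^'n) \<Rightarrow> (nat \<Rightarrow> real^'n)
   \<Rightarrow> (nat \<Rightarrow> real^'n) \<Rightarrow> (nat \<Rightarrow> real^'m) \<Rightarrow> (nat \<Rightarrow> real) \<Rightarrow> (nat \<Rightarrow> real) \<Rightarrow> (nat \<Rightarrow> real^'n) \<Rightarrow> bool"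
  where
  "ss_sqp c J x0 tau_m1 alpha_max alpha0 eps_f gamma theta sgm eps_tau
      fplus fzero H g d y tau alpha x \<longleftrightarrow>
    x 0 = x0 \<and> alpha 0 = alpha0 \<and>
    (\<forall>k.
      H k *v d k + transpose (J (x k)) *v y k = - g k \<and>
      J (x k) *v d k = - c (x k) \<and>
      tau k = tau_update eps_tau (if k = 0 then tau_m1 else tau (k - 1))
                (tau_trial sgm (l1norm (c (x k))) (g k \<bullet> d k + max (d k \<bullet> (H k *v d k)) 0)) \<and>
      (let xp = x k + alpha k *\<^sub>R d k in
        if tau k * fplus k + l1norm (c xp)
             \<le> tau k * fzero k + l1norm (c (x k))
                - alpha k * theta * Delta_l c (x k) (tau k) (g k) (d k) + 2 * tau k * eps_f
        then x (Suc k) = xp \<and> alpha (Suc k) = min alpha_max (alpha k / gamma)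
        else x (Suc k) = x k \<and> alpha (Suc k) = gamma * alpha k))"

end

theory Submission
  imports Defs
begin

lemma tr_inner: fixes A :: "real^'n^'m"
  shows "(transpose A *v w) \<bullet> z = w \<bullet> (A *v z)"
  by (metis dot_lmul_matrix transpose_transpose vector_transpose_matrix)

lemma decomp: fixes A :: "real^'n^'m"
  obtains u w where "d = u + transpose A *v w" "A *v u = 0"
proof -
  let ?S = "range (\<lambda>w. transpose A *v w)"
  have sp: "span ?S = ?S"
    by (metis span_UNIV span_linear_image matrix_vector_mul_linear)
  obtain y z where y: "y \<in> span ?S" and z: "\<And>v. v \<in> span ?S \<Longrightarrow> orthogonal z v" and dz: "d = y + z"
    using orthogonal_subspace_decomp_exists by blast
  have "y \<in> ?S" using y sp by argo
  then obtain w where yw: "y = transpose A *v w" by blast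
  have "orthogonal z (transpose A *v (A *v z))" using z sp by (metis rangeI)
  hence "(A *v z) \<bullet> (A *v z) = 0" by (metis orthogonal_def inner_commute tr_inner)
  hence "A *v z = 0" by simp
  thus thesis using that[of z w] dz yw by (simp add: add.commute)
qed

lemma svbound: fixes A :: "real^'n^'m"
  assumes "s > 0" "\<And>v. s * norm v \<le> norm (transpose A *v v)"
  shows "s * norm (transpose A *v w) \<le> norm (A *v (transpose A *v w))"
proof -
  let ?v = "transpose A *v w"
  have e: "norm ?v ^ 2 = w \<bullet> (A *v ?v)" by (metis power2_norm_eq_inner tr_inner)
  also have "\<dots> \<le> norm w * norm (A *v ?v)" by (rule norm_cauchy_schwarz)
  finally have 1: "norm ?v ^ 2 \<le> norm w * norm (A *v ?v)" .
  have "s * norm w * norm ?v \<le> norm ?v * norm ?v" using assms(2)[of w] by (simp add: mult_right_mono)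
  also have "\<dots> \<le> norm w * norm (A *v ?v)" using 1 by (simp add: power2_eq_square)
  finally have 2: "s * norm w * norm ?v \<le> norm w * norm (A *v ?v)" .
  show ?thesis
  proof (cases "w = 0")
    case True then show ?thesis by simp
  next
    case False
    then have "norm w > 0" by simp
    with 2 show ?thesis by (smt (verit, ccfv_SIG) mult.assoc mult.commute mult_le_cancel_left_pos)
  qed
qed
lemma tau_upd:
  fixes den :: real
  assumes "0 \<le> p" "0<eps" "eps<1" "0 \<le> c1" "sgm<1"
  defines "t \<equiv> tau_update eps p (tau_trial sgm c1 den)"
  shows "0 \<le> t" "t \<le> p" "t * den \<le> (1 - sgm) * c1"
proof -
  have A: "0 \<le> t \<and> t \<le> p \<and> t * den \<le> (1 - sgm) * c1"
  proof (cases "den \<le> 0")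
    case True
    then have "t = p" by (simp add: t_def tau_update_def tau_trial_def)
    moreover have "p * den \<le> 0" using True assms(1) by (simp add: mult_nonneg_nonpos)
    moreover have "0 \<le> (1 - sgm) * c1" using assms by simp
    ultimately show ?thesis using assms(1) by simp
  next
    case False
    define r where "r = (1 - sgm) * c1 / den"
    have r0: "0 \<le> r" using False assms by (simp add: r_def)
    have tr: "tau_trial sgm c1 den = ereal r" using False by (simp add: tau_trial_def r_def)
    have "0 \<le> t \<and> t \<le> p \<and> t \<le> r"
    proof (cases "p \<le> r")
      case True then show ?thesis using assms(1) by (simp add: t_def tau_update_def tr)
    next
      case F: False
      then have "t = min ((1 - eps) * p) r" by (simp add: t_def tau_update_def tr)
      then show ?thesis using F r0 assms by (auto simp: min_def mult_le_cancel_right1)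
    qed
    moreover have "r * den = (1 - sgm) * c1" using False by (simp add: r_def)
    ultimately show ?thesis using False
      by (metis less_eq_real_def mult_right_mono not_le)
  qed
  then show "0 \<le> t" "t \<le> p" "t * den \<le> (1 - sgm) * c1" by auto
qed

lemma quad:
  fixes z k a b P q1 q2 q3 nd :: real
  assumes "z > 0" "k \<ge> 0" "a \<ge> 0" "b \<ge> 0" "P \<ge> z * a\<^sup>2"
    "\<bar>q1\<bar> \<le> k * a * b" "\<bar>q2\<bar> \<le> k * a * b" "\<bar>q3\<bar> \<le> k * b\<^sup>2" "0 \<le> nd" "nd \<le> a + b"
  shows "nd\<^sup>2 \<le> (4/z) * max (P+q1+q2+q3) 0 + (4*(2*k\<^sup>2/z+k)/z + 2) * b\<^sup>2"
proof -
  define K where "K = 2*k\<^sup>2/z+k"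
  have amgm: "2*k*a*b \<le> z/2 * a\<^sup>2 + 2*k\<^sup>2/z * b\<^sup>2"
  proof -
    have "0 \<le> (z*a - 2*k*b)\<^sup>2" by simp
    hence "2*z*k*a*b*2 \<le> z*z*a\<^sup>2 + 4*k\<^sup>2*b\<^sup>2" by (simp add: power2_eq_square algebra_simps)
    hence "z*(2*k*a*b) \<le> z*(z/2 * a\<^sup>2 + 2*k\<^sup>2/z * b\<^sup>2)" using assms(1)
      by (simp add: algebra_simps power2_eq_square)
    thus ?thesis using assms(1) by simp
  qed
  have "P+q1+q2+q3 \<ge> z*a\<^sup>2 - 2*k*a*b - k*b\<^sup>2" using assms(5-8) by linarith
  hence Q: "P+q1+q2+q3 \<ge> z/2*a\<^sup>2 - K*b\<^sup>2" using amgm unfolding K_def by (simp add: algebra_simps)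
  hence "z/2*a\<^sup>2 \<le> max (P+q1+q2+q3) 0 + K*b\<^sup>2" by linarith
  hence a2: "a\<^sup>2 \<le> (2/z) * (max (P+q1+q2+q3) 0 + K*b\<^sup>2)" using assms(1)
    by (simp add: divide_simps algebra_simps)
  have "nd\<^sup>2 \<le> (a+b)\<^sup>2" using assms(9,10) by (simp add: power_mono)
  also have "\<dots> \<le> 2*a\<^sup>2 + 2*b\<^sup>2" using sum_squares_bound[of a b] by (simp add: power2_eq_square algebra_simps)
  finally have "nd\<^sup>2 \<le> 2*a\<^sup>2 + 2*b\<^sup>2" .
  also have "\<dots> \<le> 2*((2/z) * (max (P+q1+q2+q3) 0 + K*b\<^sup>2)) + 2*b\<^sup>2" using a2 by linarith
  also have "\<dots> = (4/z) * max (P+q1+q2+q3) 0 + (4*K/z + 2) * b\<^sup>2" by (simp add: algebra_simps)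
  finally show ?thesis unfolding K_def[symmetric] by simp
qed
theorem lemma3p12:
  fixes f :: "real^'n \<Rightarrow> real" and gradf :: "real^'n \<Rightarrow> real^'n"
    and c :: "real^'n \<Rightarrow> real^'m" and J :: "real^'n \<Rightarrow> real^'n^'m"
    and X :: "(real^'n) set"
    and x0 :: "real^'n"
    and tau_m1 alpha_max alpha0 eps_f gamma theta sgm eps_tau kappa_H zeta :: real
    and fplus fzero :: "'w \<Rightarrow> nat \<Rightarrow> real"
    and H :: "'w \<Rightarrow> nat \<Rightarrow> real^'n^'n"
    and g d x :: "'w \<Rightarrow> nat \<Rightarrow> real^'n"
    and y :: "'w \<Rightarrow> nat \<Rightarrow> real^'m"
    and tau alpha :: "'w \<Rightarrow> nat \<Rightarrow> real"
  assumes dims: "CARD('m) \<le> CARD('n)"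
    and f_deriv: "\<And>z. (f has_derivative (\<lambda>h. gradf z \<bullet> h)) (at z)"
    and gradf_cont: "continuous_on UNIV gradf"
    and c_deriv: "\<And>z. (c has_derivative (\<lambda>h. J z *v h)) (at z)"
    and J_cont: "continuous_on UNIV J"
    \<comment> \<open>parameters of the algorithm\<close>
    and tau_m1_pos: "tau_m1 > 0"
    and alpha_max: "0 < alpha_max" "alpha_max \<le> 1"
    and alpha0: "0 < alpha0" "alpha0 \<le> alpha_max"
    and eps_f: "eps_f \<ge> 0"
    and gamma: "0 < gamma" "gamma < 1"
    and theta: "0 < theta" "theta < 1"
    and sgm: "0 < sgm" "sgm < 1"
    and eps_tau: "0 < eps_tau" "eps_tau < 1"
    \<comment> \<open>every realization w is a run of SS-SQP\<close>
    and run: "\<And>w. ss_sqp c J x0 tau_m1 alpha_max alpha0 eps_f gamma theta sgm eps_tau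
                (fplus w) (fzero w) (H w) (g w) (d w) (y w) (tau w) (alpha w) (x w)"
    \<comment> \<open>(A1)\<close>
    and X_open: "open X" and X_convex: "convex X"
    and X_iterates: "\<And>w k. x w k \<in> X"
    and X_trial: "\<And>w k. x w k + alpha w k *\<^sub>R d w k \<in> X"
    and f_bdd: "bdd_below (f ` X)"
    and gradf_lip: "\<exists>L. \<forall>a\<in>X. \<forall>b\<in>X. norm (gradf a - gradf b) \<le> L * norm (a - b)"
    and gradf_bdd: "bounded (gradf ` X)"
    and c_bdd: "bounded (c ` X)"
    and gradc_lip: "\<And>i. \<exists>L. \<forall>a\<in>X. \<forall>b\<in>X. norm (J a $ i - J b $ i) \<le> L * norm (a - b)"
    and gradc_bdd: "\<And>i. bounded ((\<lambda>z. J z $ i) ` X)"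
    and sing_vals: "\<exists>s>0. \<forall>z\<in>X. \<forall>v. s * norm v \<le> norm (transpose (J z) *v v)"
    \<comment> \<open>(A2)\<close>
    and kappa_H: "kappa_H > 0" and zeta: "zeta > 0"
    and H_sym: "\<And>w k. transpose (H w k) = H w k"
    and H_bdd: "\<And>w k. onorm (\<lambda>v. H w k *v v) \<le> kappa_H"
    and H_pd_null: "\<And>w k u. J (x w k) *v u = 0 \<Longrightarrow> zeta * (norm u)\<^sup>2 \<le> u \<bullet> (H w k *v u)"
  shows "\<exists>kappa_l > 0. \<forall>w k.
           Delta_l c (x w k) (tau w k) (g w k) (d w k)
             \<ge> kappa_l * tau w k * ((norm (d w k))\<^sup>2 + norm (c (x w k)))"
  proof -
  obtain s where s: "s > 0" "\<forall>z\<in>X. \<forall>v. s * norm v \<le> norm (transpose (J z) *v v)"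
    using sing_vals by blast
  obtain B where B: "B > 0" "\<forall>z\<in>X. norm (c z) \<le> B"
    using c_bdd unfolding bounded_pos by auto
  have step: "J (x ww i) *v d ww i = - c (x ww i) \<and>
      tau ww i = tau_update eps_tau (if i = 0 then tau_m1 else tau ww (i - 1))
                (tau_trial sgm (l1norm (c (x ww i))) (g ww i \<bullet> d ww i + max (d ww i \<bullet> (H ww i *v d ww i)) 0))" for ww i
    using run[of ww] unfolding ss_sqp_def by blast
  have l1pos: "\<And>v. 0 \<le> l1norm (v::real^'m)" unfolding l1norm_def by (simp add: sum_nonneg)
  have taub: "0 \<le> tau ww i \<and> tau ww i \<le> tau_m1" for ww i
  proof (induction i)
    case 0
    then show ?case using step[of ww 0] tau_upd[of tau_m1 eps_tau "l1norm (c (x ww 0))" sgm] tau_m1_pos eps_tau sgm l1pos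
      by auto
  next
    case (Suc i)
    define den where "den = g ww (Suc i) \<bullet> d ww (Suc i) + max (d ww (Suc i) \<bullet> (H ww (Suc i) *v d ww (Suc i))) 0"
    have e: "tau ww (Suc i) = tau_update eps_tau (tau ww i) (tau_trial sgm (l1norm (c (x ww (Suc i)))) den)"
      using step[of ww "Suc i"] unfolding den_def by simp
    have p: "0 \<le> tau ww i" "tau ww i \<le> tau_m1" using Suc by auto
    show ?case unfolding e
      using tau_upd(1,2)[OF p(1), of eps_tau "l1norm (c (x ww (Suc i)))" sgm den] p(2) eps_tau sgm l1pos
      by auto
  qed
  define K2 where "K2 = (4*(2*kappa_H\<^sup>2/zeta+kappa_H)/zeta + 2) * B / s\<^sup>2"
  define C where "C = max (4/zeta) (tau_m1*(K2+1)/sgm)"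
  have K2pos: "K2 \<ge> 0" unfolding K2_def using B kappa_H zeta s by simp
  have Cpos: "C > 0" unfolding C_def using zeta by (simp add: less_max_iff_disj)
  have main: "1/C * tau ww i * ((norm (d ww i))\<^sup>2 + norm (c (x ww i)))
             \<le> Delta_l c (x ww i) (tau ww i) (g ww i) (d ww i)" for ww i
  proof -
    define T where "T = tau ww i"
    define dd where "dd = d ww i"
    define A where "A = J (x ww i)"
    define cc where "cc = c (x ww i)"
    define Hm where "Hm = H ww i"
    define M where "M = max (dd \<bullet> (Hm *v dd)) 0"
    define l1 where "l1 = l1norm cc"
    have T0: "0 \<le> T" "T \<le> tau_m1" using taub[of ww i] by (auto simp: T_def)
    have Ad: "A *v dd = - cc" using step[of ww i] by (simp add: A_def dd_def cc_def)
    have prev: "0 \<le> (if i = 0 then tau_m1 else tau ww (i - 1))" using taub tau_m1_pos by auto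
    have Tden: "T * (g ww i \<bullet> dd + M) \<le> (1 - sgm) * l1"
      using step[of ww i] tau_upd(3)[OF prev, of eps_tau "l1norm (c (x ww i))" sgm] eps_tau sgm l1pos
      by (simp add: T_def dd_def M_def l1_def cc_def Hm_def)
    have Del: "Delta_l c (x ww i) (tau ww i) (g ww i) (d ww i) \<ge> T * M + sgm * l1"
      using Tden unfolding Delta_l_def T_def[symmetric] dd_def[symmetric] cc_def[symmetric] l1_def[symmetric]
      by (simp add: algebra_simps)
    obtain u w' where dec: "dd = u + transpose A *v w'" "A *v u = 0" by (rule decomp)
    define v where "v = transpose A *v w'"
    have dv: "dd = u + v" unfolding v_def by (rule dec(1))
    have xX: "x ww i \<in> X" by (rule X_iterates)
    have Av: "A *v v = - cc" using Ad dec by (simp add: v_def matrix_vector_right_distrib)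
    have sv: "s * norm v \<le> norm cc"
      using svbound[of s A w'] s xX Av unfolding v_def A_def by auto
    have ccB: "norm cc \<le> B" using B xX by (simp add: cc_def)
    have b2: "(norm v)\<^sup>2 \<le> B * norm cc / s\<^sup>2"
    proof -
      have "norm v \<le> norm cc / s" using sv s by (simp add: field_simps)
      hence "(norm v)\<^sup>2 \<le> (norm cc / s)\<^sup>2" by (simp add: power_mono)
      also have "\<dots> = norm cc * norm cc / s\<^sup>2" by (simp add: power2_eq_square)
      also have "\<dots> \<le> B * norm cc / s\<^sup>2" using ccB by (simp add: divide_right_mono mult_right_mono)
      finally show ?thesis .
    qed
    have Hn: "norm (Hm *v z) \<le> kappa_H * norm z" for z
      using onorm[OF matrix_vector_mul_bounded_linear, of Hm z] H_bdd[of ww i]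
      by (metis Hm_def mult_right_mono norm_ge_zero order_trans)
    have cs: "\<bar>p \<bullet> (Hm *v q)\<bar> \<le> kappa_H * norm p * norm q" for p q
    proof -
      have "\<bar>p \<bullet> (Hm *v q)\<bar> \<le> norm p * norm (Hm *v q)" by (rule Cauchy_Schwarz_ineq2)
      also have "\<dots> \<le> norm p * (kappa_H * norm q)" by (simp add: Hn mult_left_mono)
      finally show ?thesis by (simp add: algebra_simps)
    qed
    have expand: "dd \<bullet> (Hm *v dd) = u \<bullet> (Hm *v u) + u \<bullet> (Hm *v v) + v \<bullet> (Hm *v u) + v \<bullet> (Hm *v v)"
      by (simp add: dv matrix_vector_right_distrib inner_add_left inner_add_right)
    have upd: "zeta * (norm u)\<^sup>2 \<le> u \<bullet> (Hm *v u)" using H_pd_null[of ww i u] dec(2) by (simp add: A_def Hm_def)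
    have ndle: "norm dd \<le> norm u + norm v" by (simp add: dv norm_triangle_ineq)
    have q3: "\<bar>v \<bullet> (Hm *v v)\<bar> \<le> kappa_H * (norm v)\<^sup>2" using cs[of v v] by (simp add: power2_eq_square mult.assoc)
    have dq: "(norm dd)\<^sup>2 \<le> (4/zeta) * M + (4*(2*kappa_H\<^sup>2/zeta+kappa_H)/zeta + 2) * (norm v)\<^sup>2"
      using quad[OF zeta less_imp_le[OF kappa_H] norm_ge_zero norm_ge_zero upd cs[of u v] _ q3 norm_ge_zero ndle, of "v \<bullet> (Hm *v u)"]
        cs[of v u] unfolding M_def expand by (simp add: mult_ac)
    have dq2: "(norm dd)\<^sup>2 \<le> (4/zeta) * M + K2 * norm cc"
    proof -
      have "(4*(2*kappa_H\<^sup>2/zeta+kappa_H)/zeta + 2) * (norm v)\<^sup>2 \<le> (4*(2*kappa_H\<^sup>2/zeta+kappa_H)/zeta + 2) * (B * norm cc / s\<^sup>2)"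
        using b2 zeta kappa_H by (intro mult_left_mono) auto
      also have "\<dots> = K2 * norm cc" by (simp add: K2_def)
      finally show ?thesis using dq by linarith
    qed
    have ncl1: "norm cc \<le> l1" unfolding l1_def l1norm_def by (rule norm_le_l1_cart)
    have M0: "M \<ge> 0" by (simp add: M_def)
    have "T * ((norm dd)\<^sup>2 + norm cc) \<le> T * ((4/zeta) * M + (K2 + 1) * norm cc)"
      using dq2 T0 by (intro mult_left_mono) (auto simp: algebra_simps)
    also have "\<dots> = (4/zeta) * (T * M) + T * (K2 + 1) * norm cc" by (simp add: algebra_simps)
    also have "\<dots> \<le> C * (T * M) + (tau_m1 * (K2 + 1)) * norm cc"
      using T0 M0 K2pos by (intro add_mono mult_right_mono) (auto simp: C_def)
    also have "\<dots> \<le> C * (T * M) + (C * sgm) * norm cc"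
    proof -
      have "tau_m1 * (K2 + 1) / sgm \<le> C" by (simp add: C_def)
      hence "tau_m1 * (K2 + 1) \<le> C * sgm" using sgm by (simp add: divide_le_eq)
      thus ?thesis by (intro add_left_mono mult_right_mono) auto
    qed
    also have "\<dots> \<le> C * (T * M + sgm * l1)"
      using ncl1 Cpos sgm by (simp add: algebra_simps mult_left_mono)
    also have "\<dots> \<le> C * Delta_l c (x ww i) (tau ww i) (g ww i) (d ww i)"
      using Del Cpos by (simp add: mult_left_mono)
    finally have "T * ((norm dd)\<^sup>2 + norm cc) \<le> C * Delta_l c (x ww i) (tau ww i) (g ww i) (d ww i)" .
    then show ?thesis using Cpos by (simp add: T_def dd_def cc_def field_simps)
  qed
  show ?thesis
    by (rule exI[of _ "1/C"]) (use Cpos main in auto)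
qed

end
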